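(* For $1\le q\le\tilde q\le\mathsf n$, let $\widetilde X^{\tilde q}_{q:\mathsf n}$ be such that $\widetilde X^{\tilde q}_{\tilde q}\in\mathbb X$ is arbitrary and $\widetilde X^{\tilde q}_k=X_k$ for all $q\le k\le\mathsf n$ with $k\ne\tilde q$. Then for any $1\le q\le\tilde q\le\mathsf n$, \[\big|\log\mathbb P_{\pi_V}(X_q\mid X_{q+1:\mathsf n})-\log\mathbb P_{\pi_V}(\widetilde X^{\tilde q}_q\mid\widetilde X^{\tilde q}_{q+1:\mathsf n})\big|\le\nu_q^{-1}\prod_{k=q+1}^{\tilde q-1}(1-\nu_k)\] (empty products equal $1$).
   Context: Let $\mathsf n\ge1$, $\pi_V$ a probability on a measurable space $\mathbb V$, $\mathbb X$ a discrete set, $K_i:\mathbb X\times\mathbb V^2\to[0,\infty)$ with each $K_i(\cdot,v,w)$ a probability on $\mathbb X$. $\mathbb P_{\pi_V}$ is the law of $(V_{1:\mathsf n+1},X_{1:\mathsf n})$ with $V_i$ i.i.d. $\pi_V$ and, given $V$, $X_i$ independent with $\mathbb P(X_i=x\mid V)=K_i(x,V_i,V_{i+1})$; $\mathbb P_{\pi_V}(x_q\mid x_{q+1:\mathsf n})$ denotes the conditional probability that $X_q=x_q$ given $X_{q+1:\mathsf n}=x_{q+1:\mathsf n}$. Assumption H2: there exist $\nu_i>0$ with $\nu_i\le K_i(x,v,w)\le1$ for all $x,i,v,w$. *)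

theory Defs
  imports "HOL-Probability.Probability"
begin

text \<open>Joint law of (V_{1:n+1}, X_{1:n}): V_i i.i.d. with law M, and given V the X_i are
  independent with P(X_i = x | V) = K i x (V_i) (V_{i+1}).\<close>
definition hmm_law ::
  "'v measure \<Rightarrow> (nat \<Rightarrow> 'x \<Rightarrow> 'v \<Rightarrow> 'v \<Rightarrow> real) \<Rightarrow> nat \<Rightarrow> ((nat \<Rightarrow> 'v) \<times> (nat \<Rightarrow> 'x)) measure"
  where
  "hmm_law M K n =
     density (PiM {1..n+1} (\<lambda>_. M) \<Otimes>\<^sub>M PiM {1..n} (\<lambda>_. count_space UNIV))
       (\<lambda>(v, x). ennreal (\<Prod>i\<in>{1..n}. K i (x i) (v i) (v (Suc i))))"

definition cond_prob ::
  "'v measure \<Rightarrow> (nat \<Rightarrow> 'x \<Rightarrow> 'v \<Rightarrow> 'v \<Rightarrow> real) \<Rightarrow> nat \<Rightarrow> nat \<Rightarrow> (nat \<Rightarrow> 'x) \<Rightarrow> real"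
  where
  "cond_prob M K n q xs =
     measure (hmm_law M K n) {p \<in> space (hmm_law M K n). \<forall>k\<in>{q..n}. snd p k = xs k}
   / measure (hmm_law M K n) {p \<in> space (hmm_law M K n). \<forall>k\<in>{Suc q..n}. snd p k = xs k}"

end

theory Submission
  imports Defs
begin

lemma kern_meas1:
  assumes Lm: "(\<lambda>p. L (fst p) (snd p)) \<in> borel_measurable (M \<Otimes>\<^sub>M M)" and y: "y \<in> space M"
  shows "(\<lambda>x. L x y) \<in> borel_measurable M"
  using measurable_comp[OF measurable_Pair2'[OF y] Lm] by (simp add: comp_def)

lemma step:
  fixes M :: "'v measure" and L :: "'v \<Rightarrow> 'v \<Rightarrow> real"
  assumes P: "prob_space M"
   and Lm: "(\<lambda>p. L (fst p) (snd p)) \<in> borel_measurable (M \<Otimes>\<^sub>M M)"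
   and Lb: "\<And>x y. x\<in>space M \<Longrightarrow> y\<in>space M \<Longrightarrow> c \<le> L x y \<and> L x y \<le> 1"
   and c0: "0 \<le> c" and c1: "c \<le> 1"
   and um: "u \<in> borel_measurable M" and wm: "w \<in> borel_measurable M"
   and ub: "\<And>x. x\<in>space M \<Longrightarrow> 0 \<le> w x \<and> w x \<le> 1 \<and> lo * w x \<le> u x \<and> u x \<le> hi * w x \<and> \<bar>u x\<bar> \<le> 1"
   and lh: "lo \<le> hi"
  shows "\<exists>lo' hi'. lo \<le> lo' \<and> lo' \<le> hi' \<and> hi' \<le> hi \<and> hi' - lo' \<le> (1-c)*(hi-lo) \<and>
     (\<forall>y\<in>space M. lo' * (\<integral>x. w x * L x y \<partial>M) \<le> (\<integral>x. u x * L x y \<partial>M) \<and>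
                    (\<integral>x. u x * L x y \<partial>M) \<le> hi' * (\<integral>x. w x * L x y \<partial>M))"
proof -
  interpret prob_space M by (rule P)
  have iu: "integrable M u" using um ub by (intro integrable_const_bound[where B=1]) auto
  have iw: "integrable M w" using wm ub by (intro integrable_const_bound[where B=1]) auto
  define W where "W = (\<integral>x. w x \<partial>M)"
  define E where "E = (\<integral>x. u x - lo * w x \<partial>M)"
  define F where "F = (\<integral>x. hi * w x - u x \<partial>M)"
  have W0: "0 \<le> W" unfolding W_def using ub by (intro integral_nonneg_AE) auto
  have E0: "0 \<le> E" unfolding E_def using ub by (intro integral_nonneg_AE) auto
  have F0: "0 \<le> F" unfolding F_def using ub by (intro integral_nonneg_AE) auto
  have EF: "E + F = (hi - lo) * W"
    unfolding E_def F_def W_def using iu iw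
    by (simp add: Bochner_Integration.integral_diff integral_mult_right_zero algebra_simps)
  define t where "t = (if W > 0 then c * E / W else 0)"
  have t0: "0 \<le> t" unfolding t_def using c0 E0 W0 by auto
  have tle: "t \<le> c * (hi - lo)"
  proof (cases "W > 0")
    case True
    have "c * E \<le> c * ((hi-lo) * W)" using EF F0 c0 by (intro mult_left_mono) auto
    then have "c * E \<le> c * (hi - lo) * W" by (simp add: mult.assoc)
    then have "c * E / W \<le> c * (hi - lo)" using True by (simp only: pos_divide_le_eq[OF True])
    then show ?thesis unfolding t_def using True by simp
  next
    case False then show ?thesis unfolding t_def using c0 lh by auto
  qed
  have main: "\<forall>y\<in>space M. (lo + t) * (\<integral>x. w x * L x y \<partial>M) \<le> (\<integral>x. u x * L x y \<partial>M) \<and>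
                    (\<integral>x. u x * L x y \<partial>M) \<le> (lo + t + (1-c)*(hi-lo)) * (\<integral>x. w x * L x y \<partial>M)"
  proof (intro ballI conjI)
    fix y assume y: "y \<in> space M"
    have Ly: "(\<lambda>x. L x y) \<in> borel_measurable M" by (rule kern_meas1[OF Lm y])
    have bu: "\<bar>u x * L x y\<bar> \<le> 1" if x: "x \<in> space M" for x
    proof -
      have "\<bar>u x\<bar> * \<bar>L x y\<bar> \<le> 1 * 1"
        using ub[OF x] Lb[OF x y] c0 by (intro mult_mono) auto
      then show ?thesis by (simp add: abs_mult)
    qed
    have bw: "\<bar>w x * L x y\<bar> \<le> 1" if x: "x \<in> space M" for x
    proof -
      have "\<bar>w x\<bar> * \<bar>L x y\<bar> \<le> 1 * 1"
        using ub[OF x] Lb[OF x y] c0 by (intro mult_mono) auto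
      then show ?thesis by (simp add: abs_mult)
    qed
    have iuL: "integrable M (\<lambda>x. u x * L x y)"
      using um Ly bu by (intro integrable_const_bound[where B=1] AE_I2) auto
    have iwL: "integrable M (\<lambda>x. w x * L x y)"
      using wm Ly bw by (intro integrable_const_bound[where B=1] AE_I2) auto
    define w' where "w' = (\<integral>x. w x * L x y \<partial>M)"
    define u' where "u' = (\<integral>x. u x * L x y \<partial>M)"
    have w'0: "0 \<le> w'" unfolding w'_def using ub Lb[OF _ y] c0
      by (intro integral_nonneg_AE AE_I2) (meson mult_nonneg_nonneg order_trans)
    have w'W: "w' \<le> W" unfolding w'_def W_def
      using ub Lb[OF _ y] iwL iw by (intro integral_mono) (auto intro!: mult_left_le)
    have d1: "u' - lo * w' = (\<integral>x. (u x - lo * w x) * L x y \<partial>M)"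
      unfolding u'_def w'_def using iuL iwL
      by (simp add: Bochner_Integration.integral_diff algebra_simps)
    have d2: "hi * w' - u' = (\<integral>x. (hi * w x - u x) * L x y \<partial>M)"
      unfolding u'_def w'_def using iuL iwL
      by (simp add: Bochner_Integration.integral_diff algebra_simps)
    have iE: "integrable M (\<lambda>x. u x - lo * w x)" using iu iw by auto
    have iF: "integrable M (\<lambda>x. hi * w x - u x)" using iu iw by auto
    have g1: "c * E \<le> u' - lo * w'"
    proof -
      have "c * E = (\<integral>x. c * (u x - lo * w x) \<partial>M)" unfolding E_def by simp
      also have "\<dots> \<le> (\<integral>x. (u x - lo * w x) * L x y \<partial>M)"
      proof (rule integral_mono)
        show "integrable M (\<lambda>x. c * (u x - lo * w x))" using iE by auto
        show "integrable M (\<lambda>x. (u x - lo * w x) * L x y)" using iuL iwL by (simp add: algebra_simps)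
        fix x assume x: "x \<in> space M"
        have "0 \<le> (u x - lo * w x)" using ub[OF x] by auto
        then show "c * (u x - lo * w x) \<le> (u x - lo * w x) * L x y"
          using Lb[OF x y] by (simp add: mult.commute mult_right_mono)
      qed
      also have "\<dots> = u' - lo * w'" using d1 by simp
      finally show ?thesis .
    qed
    have g2: "c * F \<le> hi * w' - u'"
    proof -
      have "c * F = (\<integral>x. c * (hi * w x - u x) \<partial>M)" unfolding F_def by simp
      also have "\<dots> \<le> (\<integral>x. (hi * w x - u x) * L x y \<partial>M)"
      proof (rule integral_mono)
        show "integrable M (\<lambda>x. c * (hi * w x - u x))" using iF by auto
        show "integrable M (\<lambda>x. (hi * w x - u x) * L x y)" using iuL iwL by (simp add: algebra_simps)
        fix x assume x: "x \<in> space M"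
        have "0 \<le> (hi * w x - u x)" using ub[OF x] by auto
        then show "c * (hi * w x - u x) \<le> (hi * w x - u x) * L x y"
          using Lb[OF x y] by (simp add: mult.commute mult_right_mono)
      qed
      also have "\<dots> = hi * w' - u'" using d2 by simp
      finally show ?thesis .
    qed
    have g3: "0 \<le> hi * w' - u'" unfolding d2
      using ub Lb[OF _ y] c0 by (intro integral_nonneg_AE AE_I2) (meson diff_ge_0_iff_ge mult_nonneg_nonneg order_trans)
    show "(lo + t) * w' \<le> u'"
    proof (cases "W > 0")
      case True
      have "t * w' \<le> t * W" using t0 w'W by (intro mult_left_mono)
      also have "t * W = c * E" unfolding t_def using True by simp
      finally show ?thesis using g1 by (simp add: algebra_simps)
    next
      case False
      then show ?thesis unfolding t_def using g1 mult_nonneg_nonneg[OF c0 E0] by (simp add: algebra_simps)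
    qed
    show "u' \<le> (lo + t + (1 - c) * (hi - lo)) * w'"
    proof (cases "W > 0")
      case True
      have "c * F * w' \<le> c * F * W" using c0 F0 w'W by (intro mult_left_mono) auto
      hence "c * F * w' / W \<le> c * F" using True by (simp add: divide_le_eq)
      moreover have "c * F * w' / W = (c * (hi - lo) - t) * w'"
      proof -
        have "(c * (hi - lo) - t) * w' = c * ((hi-lo)*W - E) * w' / W"
          unfolding t_def using True by (simp add: field_simps)
        also have "(hi-lo)*W - E = F" using EF by simp
        finally show ?thesis by simp
      qed
      ultimately show ?thesis using g2 by (simp add: algebra_simps)
    next
      case False
      hence "w' = 0" using w'W w'0 W0 by auto
      then show ?thesis using g3 by simp
    qed
  qed
  show ?thesis
    apply (rule exI[of _ "lo + t"], rule exI[of _ "lo + t + (1-c)*(hi-lo)"])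
    using main t0 tle c1 lh mult_nonneg_nonneg[of "1-c" "hi-lo"] by (simp add: algebra_simps)
qed

lemma kern_meas2:
  assumes Lm: "(\<lambda>p. L (fst p) (snd p)) \<in> borel_measurable (M \<Otimes>\<^sub>M M)" and x: "x \<in> space M"
  shows "(\<lambda>y. L x y) \<in> borel_measurable M"
  using measurable_comp[OF measurable_Pair1'[OF x] Lm] by (simp add: comp_def)

lemma kern_swap:
  assumes Lm: "(\<lambda>p. L (fst p) (snd p)) \<in> borel_measurable (M \<Otimes>\<^sub>M M)"
  shows "(\<lambda>p. L (snd p) (fst p)) \<in> borel_measurable (M \<Otimes>\<^sub>M M)"
  using measurable_comp[OF measurable_Pair[OF measurable_snd measurable_fst] Lm] by (simp add: comp_def)

primrec rchain :: "'v measure \<Rightarrow> (nat \<Rightarrow> 'v \<Rightarrow> 'v \<Rightarrow> real) \<Rightarrow> nat \<Rightarrow> nat \<Rightarrow> 'v \<Rightarrow> real" where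
  "rchain M f a 0 = (\<lambda>y. 1)"
| "rchain M f a (Suc j) = (\<lambda>y. \<integral>x. rchain M f a j x * f (a+j) x y \<partial>M)"

lemma int_kern_meas:
  fixes M :: "'v measure" and r :: "'v \<Rightarrow> real" and L :: "'v \<Rightarrow> 'v \<Rightarrow> real"
  assumes P: "prob_space M" and rm: "r \<in> borel_measurable M"
    and Lm: "(\<lambda>p. L (fst p) (snd p)) \<in> borel_measurable (M \<Otimes>\<^sub>M M)"
  shows "(\<lambda>y. \<integral>x. r x * L x y \<partial>M) \<in> borel_measurable M"
proof -
  interpret prob_space M by (rule P)
  have "(\<lambda>p. r (snd p) * L (snd p) (fst p)) \<in> borel_measurable (M \<Otimes>\<^sub>M M)"
    using borel_measurable_times[OF measurable_compose[OF measurable_snd rm] kern_swap[OF Lm]] by simp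
  then show ?thesis by (intro borel_measurable_lebesgue_integral) (simp add: case_prod_beta)
qed

lemma rchain_props:
  fixes M :: "'v measure"
  assumes P: "prob_space M"
    and fm: "\<And>k. k \<in> {a..<a+j} \<Longrightarrow> (\<lambda>p. f k (fst p) (snd p)) \<in> borel_measurable (M \<Otimes>\<^sub>M M)"
    and fb: "\<And>k x y. k \<in> {a..<a+j} \<Longrightarrow> x \<in> space M \<Longrightarrow> y \<in> space M \<Longrightarrow> c k \<le> f k x y \<and> f k x y \<le> 1"
    and c0: "\<And>k. k \<in> {a..<a+j} \<Longrightarrow> 0 \<le> c k"
  shows "rchain M f a j \<in> borel_measurable M \<and>
    (\<forall>y\<in>space M. (\<Prod>k\<in>{a..<a+j}. c k) \<le> rchain M f a j y \<and> rchain M f a j y \<le> 1)"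
  using fm fb c0
proof (induction j)
  case 0
  then show ?case by simp
next
  case (Suc j)
  interpret prob_space M by (rule P)
  have IH: "rchain M f a j \<in> borel_measurable M \<and>
    (\<forall>y\<in>space M. (\<Prod>k\<in>{a..<a+j}. c k) \<le> rchain M f a j y \<and> rchain M f a j y \<le> 1)"
    using Suc.prems by (intro Suc.IH) auto
  have kin: "a + j \<in> {a..<a + Suc j}" by simp
  have Lm: "(\<lambda>p. f (a+j) (fst p) (snd p)) \<in> borel_measurable (M \<Otimes>\<^sub>M M)" using Suc.prems(1)[OF kin] .
  have C0: "0 \<le> (\<Prod>k\<in>{a..<a+j}. c k)" using Suc.prems(3) by (intro prod_nonneg) auto
  have meas: "rchain M f a (Suc j) \<in> borel_measurable M"
    using int_kern_meas[OF P _ Lm, of "rchain M f a j"] IH by simp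
  have bnd: "(\<Prod>k\<in>{a..<a+Suc j}. c k) \<le> rchain M f a (Suc j) y \<and> rchain M f a (Suc j) y \<le> 1"
    if y: "y \<in> space M" for y
  proof -
    have Ly: "(\<lambda>x. f (a+j) x y) \<in> borel_measurable M" by (rule kern_meas1[OF Lm y])
    have b: "0 \<le> rchain M f a j x * f (a+j) x y \<and> rchain M f a j x * f (a+j) x y \<le> 1
      \<and> (\<Prod>k\<in>{a..<a+j}. c k) * c (a+j) \<le> rchain M f a j x * f (a+j) x y" if x: "x \<in> space M" for x
    proof -
      have r: "(\<Prod>k\<in>{a..<a+j}. c k) \<le> rchain M f a j x" "rchain M f a j x \<le> 1" using IH x by auto
      have ff: "c (a+j) \<le> f (a+j) x y" "f (a+j) x y \<le> 1" using Suc.prems(2)[OF kin x y] by auto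
      have cc: "0 \<le> c (a+j)" using Suc.prems(3)[OF kin] .
      show ?thesis using r ff cc C0
        by (auto intro!: mult_le_one mult_mono mult_nonneg_nonneg order_trans[OF C0 r(1)] order_trans[OF cc ff(1)])
    qed
    have int: "integrable M (\<lambda>x. rchain M f a j x * f (a+j) x y)"
      using IH Ly b by (intro integrable_const_bound[where B=1] AE_I2) auto
    have "(\<Prod>k\<in>{a..<a+Suc j}. c k) = (\<integral>x. (\<Prod>k\<in>{a..<a+j}. c k) * c (a+j) \<partial>M)"
      by (simp add: prod.atLeastLessThan_Suc prob_space)
    also have "\<dots> \<le> rchain M f a (Suc j) y"
      using int b by (simp only: rchain.simps, intro integral_mono) auto
    finally have l: "(\<Prod>k\<in>{a..<a+Suc j}. c k) \<le> rchain M f a (Suc j) y" .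
    have "rchain M f a (Suc j) y \<le> (\<integral>x. 1 \<partial>M)"
      using int b by (simp only: rchain.simps, intro integral_mono) auto
    then show ?thesis using l by (simp add: prob_space)
  qed
  show ?case using meas bnd by blast
qed

lemma prodf_meas:
  fixes M :: "'v measure" and f :: "nat \<Rightarrow> 'v \<Rightarrow> 'v \<Rightarrow> real"
  assumes fm: "\<And>k. k \<in> {a..<b} \<Longrightarrow> (\<lambda>p. f k (fst p) (snd p)) \<in> borel_measurable (M \<Otimes>\<^sub>M M)"
    and "1 \<le> a" "b \<le> N"
  shows "(\<lambda>v. \<Prod>k\<in>{a..<b}. f k (v k) (v (Suc k))) \<in> borel_measurable (PiM {1..N} (\<lambda>_. M))"
proof (rule borel_measurable_prod)
  fix k assume k: "k \<in> {a..<b}"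
  have "(\<lambda>v. (v k, v (Suc k))) \<in> measurable (PiM {1..N} (\<lambda>_. M)) (M \<Otimes>\<^sub>M M)"
    using k assms by (intro measurable_Pair measurable_component_singleton) auto
  from measurable_compose[OF this fm[OF k]] show "(\<lambda>v. f k (v k) (v (Suc k))) \<in> borel_measurable (PiM {1..N} (\<lambda>_. M))"
    by simp
qed

lemma struct:
  fixes M :: "'v measure" and f :: "nat \<Rightarrow> 'v \<Rightarrow> 'v \<Rightarrow> real" and \<phi> :: "'v \<Rightarrow> ennreal"
  assumes P: "prob_space M" and a1: "1 \<le> a"
    and fm: "\<And>k. k \<in> {a..<a+j} \<Longrightarrow> (\<lambda>p. f k (fst p) (snd p)) \<in> borel_measurable (M \<Otimes>\<^sub>M M)"
    and fb: "\<And>k x y. k \<in> {a..<a+j} \<Longrightarrow> x \<in> space M \<Longrightarrow> y \<in> space M \<Longrightarrow> 0 \<le> f k x y \<and> f k x y \<le> 1"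
    and \<phi>m: "\<phi> \<in> borel_measurable M"
  shows "(\<integral>\<^sup>+ v. ennreal (\<Prod>k\<in>{a..<a+j}. f k (v k) (v (Suc k))) * \<phi> (v (a+j)) \<partial>PiM {1..a+j} (\<lambda>_. M))
       = (\<integral>\<^sup>+ y. ennreal (rchain M f a j y) * \<phi> y \<partial>M)"
  using fm fb \<phi>m
proof (induction j arbitrary: \<phi>)
  case 0
  interpret prob_space M by (rule P)
  interpret PP: product_prob_space "\<lambda>_. M" "{1..a}" by unfold_locales
  have "(\<integral>\<^sup>+ v. \<phi> (v a) \<partial>PiM {1..a} (\<lambda>_. M)) = (\<integral>\<^sup>+ y. \<phi> y \<partial>distr (PiM {1..a} (\<lambda>_. M)) M (\<lambda>v. v a))"
    using a1 "0.prems"(3) by (subst nn_integral_distr) (auto intro!: measurable_component_singleton)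
  also have "distr (PiM {1..a} (\<lambda>_. M)) M (\<lambda>v. v a) = M"
    using PP.PiM_component[of a] a1 by simp
  finally show ?case by simp
next
  case (Suc j)
  interpret prob_space M by (rule P)
  interpret PS: product_sigma_finite "\<lambda>_. M" by unfold_locales
  interpret PM: pair_sigma_finite M M by unfold_locales
  have kin: "a + j \<in> {a..<a + Suc j}" by simp
  have Lm[measurable]: "(\<lambda>p. f (a+j) (fst p) (snd p)) \<in> borel_measurable (M \<Otimes>\<^sub>M M)" using Suc.prems(1)[OF kin] .
  note \<phi>m[measurable] = Suc.prems(3)
  define \<psi> where "\<psi> z = (\<integral>\<^sup>+ x. ennreal (f (a+j) z x) * \<phi> x \<partial>M)" for z
  have \<psi>m: "\<psi> \<in> borel_measurable M"
  proof -
    have "(\<lambda>p. ennreal (f (a+j) (fst p) (snd p)) * \<phi> (snd p)) \<in> borel_measurable (M \<Otimes>\<^sub>M M)"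
      by measurable
    then show ?thesis unfolding \<psi>_def
      by (intro borel_measurable_nn_integral) (simp add: case_prod_beta)
  qed
  have rp: "rchain M f a j \<in> borel_measurable M \<and>
    (\<forall>y\<in>space M. (\<Prod>k\<in>{a..<a+j}. (0::real)) \<le> rchain M f a j y \<and> rchain M f a j y \<le> 1)"
    using Suc.prems by (intro rchain_props[OF P, where c="\<lambda>_. 0"]) auto
  have rnn: "0 \<le> rchain M f a j y \<and> rchain M f a j y \<le> 1" if "y \<in> space M" for y
  proof -
    have "(0::real) \<le> (\<Prod>k\<in>{a..<a+j}. (0::real))" by (intro prod_nonneg) auto
    then show ?thesis using rp that by (meson order_trans)
  qed
  have IH: "(\<integral>\<^sup>+ v. ennreal (\<Prod>k\<in>{a..<a+j}. f k (v k) (v (Suc k))) * \<psi> (v (a+j)) \<partial>PiM {1..a+j} (\<lambda>_. M))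
       = (\<integral>\<^sup>+ y. ennreal (rchain M f a j y) * \<psi> y \<partial>M)"
    using Suc.prems \<psi>m by (intro Suc.IH) auto
  have ins: "{1..a + Suc j} = insert (Suc (a+j)) {1..a+j}" by (auto)
  have Gm: "(\<lambda>v. ennreal (\<Prod>k\<in>{a..<a+Suc j}. f k (v k) (v (Suc k))) * \<phi> (v (a+Suc j)))
      \<in> borel_measurable (PiM (insert (Suc (a+j)) {1..a+j}) (\<lambda>_. M))"
  proof -
    have "(\<lambda>v. \<Prod>k\<in>{a..<a+Suc j}. f k (v k) (v (Suc k))) \<in> borel_measurable (PiM {1..a+Suc j} (\<lambda>_. M))"
      using Suc.prems(1) a1 by (intro prodf_meas) auto
    moreover have "(\<lambda>v. v (a + Suc j)) \<in> measurable (PiM {1..a+Suc j} (\<lambda>_. M)) M"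
      by (intro measurable_component_singleton) auto
    ultimately show ?thesis unfolding ins[symmetric]
      by (intro borel_measurable_times_ennreal measurable_compose[OF _ \<phi>m]) auto
  qed
  have "(\<integral>\<^sup>+ v. ennreal (\<Prod>k\<in>{a..<a+Suc j}. f k (v k) (v (Suc k))) * \<phi> (v (a+Suc j)) \<partial>PiM {1..a+Suc j} (\<lambda>_. M))
     = (\<integral>\<^sup>+ v. (\<integral>\<^sup>+ x. ennreal (\<Prod>k\<in>{a..<a+Suc j}. f k ((v(Suc (a+j) := x)) k) ((v(Suc (a+j) := x)) (Suc k)))
           * \<phi> ((v(Suc (a+j) := x)) (a+Suc j)) \<partial>M) \<partial>PiM {1..a+j} (\<lambda>_. M))"
    unfolding ins by (rule PS.product_nn_integral_insert[OF _ _ Gm]) auto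
  also have "\<dots> = (\<integral>\<^sup>+ v. ennreal (\<Prod>k\<in>{a..<a+j}. f k (v k) (v (Suc k))) * \<psi> (v (a+j)) \<partial>PiM {1..a+j} (\<lambda>_. M))"
  proof (rule nn_integral_cong)
    fix v assume v: "v \<in> space (PiM {1..a+j} (\<lambda>_. M))"
    have vs: "\<And>k. k \<in> {1..a+j} \<Longrightarrow> v k \<in> space M" using v by (auto simp: space_PiM)
    have va: "v (a+j) \<in> space M" using vs a1 by auto
    have pnn: "0 \<le> (\<Prod>k\<in>{a..<a+j}. f k (v k) (v (Suc k)))"
      using Suc.prems(2) vs a1 by (intro prod_nonneg) auto
    have eq: "ennreal (\<Prod>k\<in>{a..<a+Suc j}. f k ((v(Suc (a+j) := x)) k) ((v(Suc (a+j) := x)) (Suc k)))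
           * \<phi> ((v(Suc (a+j) := x)) (a+Suc j))
         = ennreal (\<Prod>k\<in>{a..<a+j}. f k (v k) (v (Suc k))) * (ennreal (f (a+j) (v (a+j)) x) * \<phi> x)"
      if x: "x \<in> space M" for x
    proof -
      have "(\<Prod>k\<in>{a..<a+Suc j}. f k ((v(Suc (a+j) := x)) k) ((v(Suc (a+j) := x)) (Suc k)))
          = (\<Prod>k\<in>{a..<a+j}. f k ((v(Suc (a+j) := x)) k) ((v(Suc (a+j) := x)) (Suc k))) * f (a+j) (v (a+j)) x"
        by (simp add: prod.atLeastLessThan_Suc)
      also have "(\<Prod>k\<in>{a..<a+j}. f k ((v(Suc (a+j) := x)) k) ((v(Suc (a+j) := x)) (Suc k)))
          = (\<Prod>k\<in>{a..<a+j}. f k (v k) (v (Suc k)))"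
        by (intro prod.cong) auto
      finally show ?thesis
        using pnn Suc.prems(2)[OF kin va x] by (simp add: ennreal_mult mult.assoc)
    qed
    have "(\<integral>\<^sup>+ x. ennreal (\<Prod>k\<in>{a..<a+Suc j}. f k ((v(Suc (a+j) := x)) k) ((v(Suc (a+j) := x)) (Suc k)))
           * \<phi> ((v(Suc (a+j) := x)) (a+Suc j)) \<partial>M)
        = (\<integral>\<^sup>+ x. ennreal (\<Prod>k\<in>{a..<a+j}. f k (v k) (v (Suc k))) * (ennreal (f (a+j) (v (a+j)) x) * \<phi> x) \<partial>M)"
      by (rule nn_integral_cong) (use eq in auto)
    also have "\<dots> = ennreal (\<Prod>k\<in>{a..<a+j}. f k (v k) (v (Suc k))) * \<psi> (v (a+j))"
      unfolding \<psi>_def using va kern_meas2[OF Lm va] Suc.prems(3)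
      by (intro nn_integral_cmult borel_measurable_times_ennreal measurable_compose[OF _ measurable_ennreal]) auto
    finally show "(\<integral>\<^sup>+ x. ennreal (\<Prod>k\<in>{a..<a+Suc j}. f k ((v(Suc (a+j) := x)) k) ((v(Suc (a+j) := x)) (Suc k)))
           * \<phi> ((v(Suc (a+j) := x)) (a+Suc j)) \<partial>M) = ennreal (\<Prod>k\<in>{a..<a+j}. f k (v k) (v (Suc k))) * \<psi> (v (a+j))" .
  qed
  also have "\<dots> = (\<integral>\<^sup>+ y. ennreal (rchain M f a j y) * \<psi> y \<partial>M)" by (rule IH)
  also have "\<dots> = (\<integral>\<^sup>+ y. (\<integral>\<^sup>+ x. ennreal (rchain M f a j y) * (ennreal (f (a+j) y x) * \<phi> x) \<partial>M) \<partial>M)"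
    unfolding \<psi>_def using kern_meas2[OF Lm] Suc.prems(3)
    by (intro nn_integral_cong nn_integral_cmult[symmetric] borel_measurable_times_ennreal measurable_compose[OF _ measurable_ennreal]) auto
  also have "\<dots> = (\<integral>\<^sup>+ x. (\<integral>\<^sup>+ y. ennreal (rchain M f a j y) * (ennreal (f (a+j) y x) * \<phi> x) \<partial>M) \<partial>M)"
  proof (rule PM.Fubini')
    have rm: "rchain M f a j \<in> borel_measurable M" using rp by simp
    have m1: "(\<lambda>p. ennreal (rchain M f a j (snd p))) \<in> borel_measurable (M \<Otimes>\<^sub>M M)"
      by (intro measurable_compose[OF _ measurable_ennreal] measurable_compose[OF measurable_snd rm])
    have m2: "(\<lambda>p. ennreal (f (a + j) (snd p) (fst p))) \<in> borel_measurable (M \<Otimes>\<^sub>M M)"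
      by (intro measurable_compose[OF _ measurable_ennreal] kern_swap[OF Lm])
    have m3: "(\<lambda>p. \<phi> (fst p)) \<in> borel_measurable (M \<Otimes>\<^sub>M M)"
      by (intro measurable_compose[OF measurable_fst Suc.prems(3)])
    have "(\<lambda>p. ennreal (rchain M f a j (snd p)) * (ennreal (f (a + j) (snd p) (fst p)) * \<phi> (fst p))) \<in> borel_measurable (M \<Otimes>\<^sub>M M)"
      by (intro borel_measurable_times_ennreal m1 m2 m3)
    then show "(\<lambda>(x, y). ennreal (rchain M f a j y) * (ennreal (f (a + j) y x) * \<phi> x)) \<in> borel_measurable (M \<Otimes>\<^sub>M M)"
      by (simp add: case_prod_beta)
  qed
  also have "\<dots> = (\<integral>\<^sup>+ x. ennreal (rchain M f a (Suc j) x) * \<phi> x \<partial>M)"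
  proof (rule nn_integral_cong)
    fix x assume x: "x \<in> space M"
    have rm[measurable]: "rchain M f a j \<in> borel_measurable M" using rp by simp
    have Lx: "(\<lambda>y. f (a+j) y x) \<in> borel_measurable M" by (rule kern_meas1[OF Lm x])
    have b: "0 \<le> rchain M f a j y * f (a+j) y x \<and> rchain M f a j y * f (a+j) y x \<le> 1" if y: "y \<in> space M" for y
      using rnn[OF y] Suc.prems(2)[OF kin y x] by (auto intro!: mult_le_one)
    have int: "integrable M (\<lambda>y. rchain M f a j y * f (a+j) y x)"
      using Lx b by (intro integrable_const_bound[where B=1] AE_I2) auto
    have "(\<integral>\<^sup>+ y. ennreal (rchain M f a j y) * (ennreal (f (a+j) y x) * \<phi> x) \<partial>M)
        = (\<integral>\<^sup>+ y. ennreal (rchain M f a j y * f (a+j) y x) * \<phi> x \<partial>M)"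
      by (rule nn_integral_cong) (use rnn Suc.prems(2)[OF kin _ x] in \<open>auto simp: ennreal_mult mult.assoc\<close>)
    also have "\<dots> = (\<integral>\<^sup>+ y. ennreal (rchain M f a j y * f (a+j) y x) \<partial>M) * \<phi> x"
      using Lx by (intro nn_integral_multc) measurable
    also have "(\<integral>\<^sup>+ y. ennreal (rchain M f a j y * f (a+j) y x) \<partial>M) = ennreal (rchain M f a (Suc j) x)"
      using int b by (simp only: rchain.simps, intro nn_integral_eq_integral) auto
    finally show "(\<integral>\<^sup>+ y. ennreal (rchain M f a j y) * (ennreal (f (a+j) y x) * \<phi> x) \<partial>M)
        = ennreal (rchain M f a (Suc j) x) * \<phi> x" .
  qed
  finally show ?case .
qed

lemma dens_meas:
  fixes M :: "'v measure" and K :: "nat \<Rightarrow> 'x \<Rightarrow> 'v \<Rightarrow> 'v \<Rightarrow> real"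
  assumes fin: "finite (UNIV :: 'x set)"
    and K_meas: "\<And>i x. i \<in> {1..n} \<Longrightarrow> (\<lambda>p. K i x (fst p) (snd p)) \<in> borel_measurable (M \<Otimes>\<^sub>M M)"
  shows "(\<lambda>(v, x). ennreal (\<Prod>i\<in>{1..n}. K i (x i) (v i) (v (Suc i))))
     \<in> borel_measurable (PiM {1..n+1} (\<lambda>_. M) \<Otimes>\<^sub>M PiM {1..n} (\<lambda>_. count_space UNIV))"
proof -
  let ?N = "PiM {1..n+1} (\<lambda>_. M) \<Otimes>\<^sub>M PiM {1..n} (\<lambda>_. count_space (UNIV :: 'x set))"
  have "(\<lambda>p. \<Prod>i\<in>{1..n}. K i (snd p i) (fst p i) (fst p (Suc i))) \<in> borel_measurable ?N"
  proof (rule borel_measurable_prod)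
    fix i assume i: "i \<in> {1..n}"
    have pm: "(\<lambda>p. (fst p i, fst p (Suc i))) \<in> measurable ?N (M \<Otimes>\<^sub>M M)"
      using i by (intro measurable_Pair measurable_compose[OF measurable_fst measurable_component_singleton]) auto
    have gm: "(\<lambda>p. snd p i) \<in> measurable ?N (count_space UNIV)"
      using i by (intro measurable_compose[OF measurable_snd measurable_component_singleton]) auto
    show "(\<lambda>p. K i (snd p i) (fst p i) (fst p (Suc i))) \<in> borel_measurable ?N"
    proof (rule measurable_compose_countable'[OF _ gm])
      fix c :: 'x
      show "(\<lambda>p. K i c (fst p i) (fst p (Suc i))) \<in> borel_measurable ?N"
        using measurable_compose[OF pm K_meas[OF i, of c]] by simp
    next
      show "countable (UNIV :: 'x set)" using fin by (rule countable_finite)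
    qed
  qed
  from measurable_compose[OF this measurable_ennreal] show ?thesis
    by (simp add: case_prod_beta)
qed

lemma indicator_prod_eq:
  fixes xs :: "nat \<Rightarrow> 'x"
  assumes "S \<subseteq> I" "finite I"
  shows "(if \<forall>k\<in>S. x k = xs k then 1 else 0) = (\<Prod>i\<in>I. (if i \<in> S then (if x i = xs i then 1 else 0) else (1::ennreal)))"
proof (cases "\<forall>k\<in>S. x k = xs k")
  case True
  have "(\<Prod>i\<in>I. (if i \<in> S then (if x i = xs i then 1 else 0) else (1::ennreal))) = 1"
    using True by (intro prod.neutral) auto
  then show ?thesis using True by simp
next
  case False
  then obtain k where k: "k \<in> S" "x k \<noteq> xs k" by auto
  have "(\<Prod>i\<in>I. (if i \<in> S then (if x i = xs i then 1 else 0) else (1::ennreal))) = 0"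
    using k assms by (intro prod_zero) auto
  moreover have "(if \<forall>k\<in>S. x k = xs k then 1 else 0) = (0::ennreal)" using False by simp
  ultimately show ?thesis by simp
qed

lemma meas_cyl:
  fixes M :: "'v measure" and K :: "nat \<Rightarrow> 'x \<Rightarrow> 'v \<Rightarrow> 'v \<Rightarrow> real" and xs :: "nat \<Rightarrow> 'x"
  assumes P: "prob_space M" and fin: "finite (UNIV :: 'x set)"
    and K_meas: "\<And>i x. i \<in> {1..n} \<Longrightarrow> (\<lambda>p. K i x (fst p) (snd p)) \<in> borel_measurable (M \<Otimes>\<^sub>M M)"
    and Ksum: "\<And>i v w. i \<in> {1..n} \<Longrightarrow> v \<in> space M \<Longrightarrow> w \<in> space M \<Longrightarrow> (\<Sum>x\<in>UNIV. K i x v w) = 1"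
    and Kb: "\<And>i x v w. i \<in> {1..n} \<Longrightarrow> v \<in> space M \<Longrightarrow> w \<in> space M \<Longrightarrow> 0 \<le> K i x v w \<and> K i x v w \<le> 1"
    and a1: "1 \<le> a" and an: "a \<le> n + 1"
  shows "measure (hmm_law M K n) {p \<in> space (hmm_law M K n). \<forall>k\<in>{a..n}. snd p k = xs k}
       = (\<integral>y. rchain M (\<lambda>k. K k (xs k)) a (n + 1 - a) y \<partial>M)"
proof -
  interpret prob_space M by (rule P)
  let ?PV = "PiM {1..n+1} (\<lambda>_. M)"
  let ?PX = "PiM {1..n} (\<lambda>_. count_space (UNIV :: 'x set))"
  let ?N = "?PV \<Otimes>\<^sub>M ?PX"
  define dens where "dens = (\<lambda>(v, x). ennreal (\<Prod>i\<in>{1..n}. K i (x i) (v i) (v (Suc i))))"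
  define C where "C = {p \<in> space ?N. \<forall>k\<in>{a..n}. snd p k = xs k}"
  define j where "j = n + 1 - a"
  have aj: "a + j = n + 1" unfolding j_def using an by simp
  have hl: "hmm_law M K n = density ?N dens" unfolding hmm_law_def dens_def by simp
  have dm: "dens \<in> borel_measurable ?N" unfolding dens_def by (rule dens_meas[OF fin K_meas])
  have Cm: "C \<in> sets ?N"
  proof -
    have "{p \<in> space ?N. \<forall>k\<in>{a..n}. snd p k = xs k} \<in> sets ?N"
    proof (rule sets.sets_Collect_finite_All)
      fix k assume k: "k \<in> {a..n}"
      have gm: "(\<lambda>p. snd p k) \<in> measurable ?N (count_space UNIV)"
        using k a1 by (intro measurable_compose[OF measurable_snd measurable_component_singleton]) auto
      have "(\<lambda>p. snd p k) -` {xs k} \<inter> space ?N \<in> sets ?N"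
        by (rule measurable_sets[OF gm]) simp
      moreover have "(\<lambda>p. snd p k) -` {xs k} \<inter> space ?N = {p \<in> space ?N. snd p k = xs k}" by auto
      ultimately show "{p \<in> space ?N. snd p k = xs k} \<in> sets ?N" by simp
    qed simp
    then show ?thesis unfolding C_def .
  qed
  have sfX: "sigma_finite_measure ?PX"
  proof -
    interpret PXs: product_sigma_finite "\<lambda>_. count_space (UNIV :: 'x set)"
      unfolding product_sigma_finite_def by (simp add: sigma_finite_measure_count_space_finite[OF fin])
    interpret PXf: finite_product_sigma_finite "\<lambda>_. count_space (UNIV :: 'x set)" "{1..n}"
      by unfold_locales simp
    show ?thesis by unfold_locales
  qed
  have eC: "emeasure (hmm_law M K n) C = (\<integral>\<^sup>+ p. dens p * indicator C p \<partial>?N)"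
    unfolding hl by (rule emeasure_density[OF dm Cm])
  also have "\<dots> = (\<integral>\<^sup>+ v. (\<integral>\<^sup>+ x. dens (v, x) * indicator C (v, x) \<partial>?PX) \<partial>?PV)"
    using borel_measurable_times_ennreal[OF dm borel_measurable_indicator[OF Cm]]
    by (intro sigma_finite_measure.nn_integral_fst[OF sfX, symmetric]) simp
  also have "\<dots> = (\<integral>\<^sup>+ v. ennreal (\<Prod>k\<in>{a..<a+j}. K k (xs k) (v k) (v (Suc k))) * 1 \<partial>?PV)"
  proof (rule nn_integral_cong)
    fix v assume v: "v \<in> space ?PV"
    have vs: "\<And>k. k \<in> {1..n+1} \<Longrightarrow> v k \<in> space M" using v by (auto simp: space_PiM)
    interpret PXs: product_sigma_finite "\<lambda>_. count_space (UNIV :: 'x set)"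
      unfolding product_sigma_finite_def by (simp add: sigma_finite_measure_count_space_finite[OF fin])
    define g where "g i c = ennreal (K i c (v i) (v (Suc i))) * (if i \<in> {a..n} then (if c = xs i then 1 else 0) else 1)" for i c
    have "(\<integral>\<^sup>+ x. dens (v, x) * indicator C (v, x) \<partial>?PX) = (\<integral>\<^sup>+ x. (\<Prod>i\<in>{1..n}. g i (x i)) \<partial>?PX)"
    proof (rule nn_integral_cong)
      fix x assume x: "x \<in> space ?PX"
      have vx: "(v, x) \<in> space ?N" using v x by (simp add: space_pair_measure)
      have ind: "indicator C (v, x) = (if \<forall>k\<in>{a..n}. x k = xs k then 1 else (0::ennreal))"
        using vx unfolding C_def by (auto simp: indicator_def)
      have "dens (v, x) = (\<Prod>i\<in>{1..n}. ennreal (K i (x i) (v i) (v (Suc i))))"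
        unfolding dens_def using Kb vs by (simp, intro prod_ennreal[symmetric]) auto
      then show "dens (v, x) * indicator C (v, x) = (\<Prod>i\<in>{1..n}. g i (x i))"
        unfolding ind g_def using a1
        by (subst indicator_prod_eq[of _ "{1..n}"]) (auto simp: prod.distrib)
    qed
    also have "\<dots> = (\<Prod>i\<in>{1..n}. (\<integral>\<^sup>+ c. g i c \<partial>count_space UNIV))"
      by (rule PXs.product_nn_integral_prod) auto
    also have "\<dots> = (\<Prod>i\<in>{1..n}. (if i \<in> {a..n} then ennreal (K i (xs i) (v i) (v (Suc i))) else 1))"
    proof (rule prod.cong)
      fix i assume i: "i \<in> {1..n}"
      have "(\<integral>\<^sup>+ c. g i c \<partial>count_space UNIV) = (\<Sum>c\<in>UNIV. g i c)"
        by (rule nn_integral_count_space_finite[OF fin])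
      also have "\<dots> = (if i \<in> {a..n} then ennreal (K i (xs i) (v i) (v (Suc i))) else 1)"
      proof (cases "i \<in> {a..n}")
        case True
        then show ?thesis unfolding g_def using fin by (simp add: if_distrib[of "\<lambda>t. _ * t"] cong: if_cong)
      next
        case False
        have "(\<Sum>c\<in>UNIV. ennreal (K i c (v i) (v (Suc i)))) = ennreal (\<Sum>c\<in>UNIV. K i c (v i) (v (Suc i)))"
          using Kb[OF i] vs i by (intro sum_ennreal) auto
        also have "\<dots> = 1" using Ksum[OF i] vs i by simp
        moreover have "\<And>c. g i c = ennreal (K i c (v i) (v (Suc i)))" using False unfolding g_def by auto
        ultimately show ?thesis using False by auto
      qed
      finally show "(\<integral>\<^sup>+ c. g i c \<partial>count_space UNIV) = (if i \<in> {a..n} then ennreal (K i (xs i) (v i) (v (Suc i))) else 1)" .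
    qed simp
    also have "\<dots> = (\<Prod>i\<in>{a..n}. ennreal (K i (xs i) (v i) (v (Suc i))))"
      using a1 by (subst prod.If_cases) (auto intro!: prod.cong)
    also have "\<dots> = ennreal (\<Prod>k\<in>{a..<a+j}. K k (xs k) (v k) (v (Suc k)))"
    proof -
      have "{a..<a+j} = {a..n}" using aj by auto
      then show ?thesis using Kb vs a1 by (simp, intro prod_ennreal) auto
    qed
    finally show "(\<integral>\<^sup>+ x. dens (v, x) * indicator C (v, x) \<partial>?PX) = ennreal (\<Prod>k\<in>{a..<a+j}. K k (xs k) (v k) (v (Suc k))) * 1"
      by simp
  qed
  also have "\<dots> = (\<integral>\<^sup>+ y. ennreal (rchain M (\<lambda>k. K k (xs k)) a j y) * 1 \<partial>M)"
    using struct[OF P a1, of j "\<lambda>k. K k (xs k)" "\<lambda>_. 1"] aj K_meas Kb a1 by simp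
  also have "\<dots> = ennreal (\<integral>y. rchain M (\<lambda>k. K k (xs k)) a j y \<partial>M)"
  proof -
    have rp: "rchain M (\<lambda>k. K k (xs k)) a j \<in> borel_measurable M \<and>
      (\<forall>y\<in>space M. (\<Prod>k\<in>{a..<a+j}. (0::real)) \<le> rchain M (\<lambda>k. K k (xs k)) a j y \<and> rchain M (\<lambda>k. K k (xs k)) a j y \<le> 1)"
      using K_meas Kb a1 aj by (intro rchain_props[OF P]) auto
    have z: "(0::real) \<le> (\<Prod>k\<in>{a..<a+j}. (0::real))" by (intro prod_nonneg) auto
    have b: "\<And>y. y \<in> space M \<Longrightarrow> 0 \<le> rchain M (\<lambda>k. K k (xs k)) a j y \<and> rchain M (\<lambda>k. K k (xs k)) a j y \<le> 1"
      using rp z by (meson order_trans)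
    have int: "integrable M (rchain M (\<lambda>k. K k (xs k)) a j)"
      using rp b by (intro integrable_const_bound[where B=1] AE_I2) auto
    show ?thesis using int b by (simp, intro nn_integral_eq_integral) auto
  qed
  finally have "emeasure (hmm_law M K n) C = ennreal (\<integral>y. rchain M (\<lambda>k. K k (xs k)) a j y \<partial>M)" .
  moreover have "0 \<le> (\<integral>y. rchain M (\<lambda>k. K k (xs k)) a j y \<partial>M)"
  proof -
    have rp: "\<forall>y\<in>space M. (\<Prod>k\<in>{a..<a+j}. (0::real)) \<le> rchain M (\<lambda>k. K k (xs k)) a j y"
      using rchain_props[OF P, of a j "\<lambda>k. K k (xs k)" "\<lambda>_. 0"] K_meas Kb a1 aj by auto
    have z: "(0::real) \<le> (\<Prod>k\<in>{a..<a+j}. (0::real))" by (intro prod_nonneg) auto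
    show ?thesis using rp z by (intro integral_nonneg_AE AE_I2) (meson order_trans)
  qed
  moreover have "space (hmm_law M K n) = space ?N" unfolding hl by simp
  ultimately show ?thesis unfolding C_def j_def measure_def by simp
qed

lemma rchain_01:
  fixes M :: "'v measure"
  assumes P: "prob_space M"
    and fm: "\<And>k. k \<in> {a..<a+j} \<Longrightarrow> (\<lambda>p. f k (fst p) (snd p)) \<in> borel_measurable (M \<Otimes>\<^sub>M M)"
    and fb: "\<And>k x y. k \<in> {a..<a+j} \<Longrightarrow> x \<in> space M \<Longrightarrow> y \<in> space M \<Longrightarrow> 0 \<le> f k x y \<and> f k x y \<le> 1"
  shows "rchain M f a j \<in> borel_measurable M \<and> (\<forall>y\<in>space M. 0 \<le> rchain M f a j y \<and> rchain M f a j y \<le> 1)"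
proof -
  have rp: "rchain M f a j \<in> borel_measurable M \<and>
    (\<forall>y\<in>space M. (\<Prod>k\<in>{a..<a+j}. (0::real)) \<le> rchain M f a j y \<and> rchain M f a j y \<le> 1)"
    using fm fb by (intro rchain_props[OF P]) auto
  have z: "(0::real) \<le> (\<Prod>k\<in>{a..<a+j}. (0::real))" by (intro prod_nonneg) auto
  show ?thesis using rp z by (meson order_trans)
qed

lemma rchain_cong:
  assumes "\<And>k. k \<in> {a..<a+j} \<Longrightarrow> f k = g k"
  shows "rchain M f a j = rchain M g a j"
  using assms by (induction j) auto

lemma chain_step:
  fixes M :: "'v measure" and f :: "nat \<Rightarrow> 'v \<Rightarrow> 'v \<Rightarrow> real"
  assumes P: "prob_space M"
    and fm: "\<And>k. k \<in> {q..q+1+j} \<Longrightarrow> (\<lambda>p. f k (fst p) (snd p)) \<in> borel_measurable (M \<Otimes>\<^sub>M M)"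
    and fb: "\<And>k x y. k \<in> {q..q+1+j} \<Longrightarrow> x \<in> space M \<Longrightarrow> y \<in> space M \<Longrightarrow> 0 \<le> f k x y \<and> f k x y \<le> 1"
    and cb: "\<And>x y. x \<in> space M \<Longrightarrow> y \<in> space M \<Longrightarrow> c \<le> f (q+1+j) x y"
    and c0: "0 \<le> c" and c1: "c \<le> 1"
    and inv: "\<forall>y\<in>space M. lo * rchain M f (q+1) j y \<le> rchain M f q (Suc j) y \<and> rchain M f q (Suc j) y \<le> hi * rchain M f (q+1) j y"
    and lh: "lo \<le> hi"
  shows "\<exists>lo' hi'. lo \<le> lo' \<and> lo' \<le> hi' \<and> hi' \<le> hi \<and> hi' - lo' \<le> (1-c)*(hi-lo) \<and>
    (\<forall>y\<in>space M. lo' * rchain M f (q+1) (Suc j) y \<le> rchain M f q (Suc (Suc j)) y \<and> rchain M f q (Suc (Suc j)) y \<le> hi' * rchain M f (q+1) (Suc j) y)"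
proof -
  have u: "rchain M f q (Suc j) \<in> borel_measurable M \<and> (\<forall>y\<in>space M. 0 \<le> rchain M f q (Suc j) y \<and> rchain M f q (Suc j) y \<le> 1)"
    using fm fb by (intro rchain_01[OF P]) auto
  have w: "rchain M f (q+1) j \<in> borel_measurable M \<and> (\<forall>y\<in>space M. 0 \<le> rchain M f (q+1) j y \<and> rchain M f (q+1) j y \<le> 1)"
    using fm fb by (intro rchain_01[OF P]) auto
  have kk: "q+1+j \<in> {q..q+1+j}" by simp
  have "\<exists>lo' hi'. lo \<le> lo' \<and> lo' \<le> hi' \<and> hi' \<le> hi \<and> hi' - lo' \<le> (1-c)*(hi-lo) \<and>
     (\<forall>y\<in>space M. lo' * (\<integral>x. rchain M f (q+1) j x * f (q+1+j) x y \<partial>M) \<le> (\<integral>x. rchain M f q (Suc j) x * f (q+1+j) x y \<partial>M) \<and>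
                    (\<integral>x. rchain M f q (Suc j) x * f (q+1+j) x y \<partial>M) \<le> hi' * (\<integral>x. rchain M f (q+1) j x * f (q+1+j) x y \<partial>M))"
  proof (rule step[OF P fm[OF kk] _ c0 c1])
    show "\<And>x y. x \<in> space M \<Longrightarrow> y \<in> space M \<Longrightarrow> c \<le> f (q + 1 + j) x y \<and> f (q + 1 + j) x y \<le> 1"
      using cb fb[OF kk] by auto
    show "rchain M f q (Suc j) \<in> borel_measurable M" using u by simp
    show "rchain M f (q+1) j \<in> borel_measurable M" using w by simp
    show "\<And>x. x \<in> space M \<Longrightarrow> 0 \<le> rchain M f (q+1) j x \<and> rchain M f (q+1) j x \<le> 1 \<and>
       lo * rchain M f (q+1) j x \<le> rchain M f q (Suc j) x \<and> rchain M f q (Suc j) x \<le> hi * rchain M f (q+1) j x \<and>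
       \<bar>rchain M f q (Suc j) x\<bar> \<le> 1"
      using u w inv by auto
  qed (rule lh)
  then show ?thesis by (simp add: add.commute add.left_commute)
qed

lemma log_bound:
  fixes a b lo hi c P :: real
  assumes "0 < c" "c \<le> lo" "lo \<le> a" "a \<le> hi" "lo \<le> b" "b \<le> hi" "hi - lo \<le> P"
  shows "\<bar>ln a - ln b\<bar> \<le> (1 / c) * P"
proof -
  have one: "ln s - ln t \<le> (1 / c) * P" if s: "lo \<le> s" "s \<le> hi" and t: "lo \<le> t" "t \<le> hi" for s t
  proof -
    have sp: "0 < s" and tp: "0 < t" using assms s t by auto
    have "ln s - ln t = ln (s / t)" using sp tp by (simp add: ln_div)
    also have "\<dots> \<le> s / t - 1" using sp tp by (intro ln_le_minus_one) simp
    also have "\<dots> = (s - t) / t" using tp by (simp add: field_simps)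
    also have "\<dots> \<le> (1 / c) * P"
    proof (cases "s \<le> t")
      case True
      then have "(s - t) / t \<le> 0" using tp by (simp add: divide_nonpos_pos)
      moreover have "0 \<le> (1 / c) * P" using assms by auto
      ultimately show ?thesis by linarith
    next
      case False
      have "(s - t) / t \<le> (s - t) / c" using False tp assms t
        by (intro divide_left_mono) auto
      also have "\<dots> \<le> P / c" using assms s t by (intro divide_right_mono) auto
      finally show ?thesis by simp
    qed
    finally show ?thesis .
  qed
  show ?thesis using one[of a b] one[of b a] assms by (simp add: abs_le_iff)
qed

lemma ratio_bound:
  fixes M :: "'v measure" and u w :: "'v \<Rightarrow> real"
  assumes P: "prob_space M" and um: "u \<in> borel_measurable M" and wm: "w \<in> borel_measurable M"
    and b: "\<And>y. y \<in> space M \<Longrightarrow> c \<le> w y \<and> w y \<le> 1 \<and> \<bar>u y\<bar> \<le> 1 \<and> lo * w y \<le> u y \<and> u y \<le> hi * w y"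
    and c: "0 < c"
  shows "lo \<le> (\<integral>y. u y \<partial>M) / (\<integral>y. w y \<partial>M) \<and> (\<integral>y. u y \<partial>M) / (\<integral>y. w y \<partial>M) \<le> hi"
proof -
  interpret prob_space M by (rule P)
  have iu: "integrable M u" using um b by (intro integrable_const_bound[where B=1] AE_I2) auto
  have wb: "\<bar>w y\<bar> \<le> 1" if "y \<in> space M" for y using b[OF that] c unfolding abs_le_iff by linarith
  have iw: "integrable M w" using wm wb by (intro integrable_const_bound[where B=1] AE_I2) auto
  have "c = (\<integral>y. c \<partial>M)" by (simp add: prob_space)
  also have "\<dots> \<le> (\<integral>y. w y \<partial>M)" using iw b by (intro integral_mono) auto
  finally have Dp: "0 < (\<integral>y. w y \<partial>M)" using c by linarith
  have "lo * (\<integral>y. w y \<partial>M) = (\<integral>y. lo * w y \<partial>M)" by simp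
  also have "\<dots> \<le> (\<integral>y. u y \<partial>M)" using iw iu b by (intro integral_mono) auto
  finally have l: "lo * (\<integral>y. w y \<partial>M) \<le> (\<integral>y. u y \<partial>M)" .
  have "(\<integral>y. u y \<partial>M) \<le> (\<integral>y. hi * w y \<partial>M)" using iw iu b by (intro integral_mono) auto
  also have "\<dots> = hi * (\<integral>y. w y \<partial>M)" by simp
  finally have h: "(\<integral>y. u y \<partial>M) \<le> hi * (\<integral>y. w y \<partial>M)" .
  show ?thesis using l h Dp by (simp add: pos_le_divide_eq pos_divide_le_eq)
qed

theorem lemma8:
  fixes M :: "'v measure"
    and K :: "nat \<Rightarrow> 'x \<Rightarrow> 'v \<Rightarrow> 'v \<Rightarrow> real"
    and \<nu> :: "nat \<Rightarrow> real"
    and n q q' :: nat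
    and xs :: "nat \<Rightarrow> 'x"
    and x' :: 'x
  assumes "prob_space M"
    and "n \<ge> 1"
    and K_meas: "\<And>i x. i \<in> {1..n} \<Longrightarrow>
                   (\<lambda>p. K i x (fst p) (snd p)) \<in> borel_measurable (M \<Otimes>\<^sub>M M)"
    and K_prob: "\<And>i v w. i \<in> {1..n} \<Longrightarrow> v \<in> space M \<Longrightarrow> w \<in> space M \<Longrightarrow>
                   ((\<lambda>x. K i x v w) has_sum 1) UNIV"
    and H2_pos: "\<And>i. i \<in> {1..n} \<Longrightarrow> \<nu> i > 0"
    and H2: "\<And>i x v w. i \<in> {1..n} \<Longrightarrow> v \<in> space M \<Longrightarrow> w \<in> space M \<Longrightarrow>
                   \<nu> i \<le> K i x v w \<and> K i x v w \<le> 1"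
    and "1 \<le> q" and "q \<le> q'" and "q' \<le> n"
  shows "\<bar>ln (cond_prob M K n q xs) - ln (cond_prob M K n q (xs(q' := x')))\<bar>
           \<le> (1 / \<nu> q) * (\<Prod>k\<in>{q+1..q'-1}. (1 - \<nu> k))"
proof -
  note P = assms(1)
  interpret prob_space M by (rule P)
  note q1 = assms(7) and qq = assms(8) and qn = assms(9)
  obtain v0 where v0: "v0 \<in> space M" using not_empty by auto
  have one_in: "1 \<in> {1..n}" using assms(2) by simp
  have Kb: "0 \<le> K i x v w \<and> K i x v w \<le> 1" if "i \<in> {1..n}" "v \<in> space M" "w \<in> space M" for i x v w
    using H2[OF that, of x] H2_pos[OF that(1)] by linarith
  have nu1: "\<nu> i \<le> 1" if "i \<in> {1..n}" for i
    using H2[OF that v0 v0, of undefined] by linarith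
  have fin: "finite (UNIV :: 'x set)"
  proof (rule ccontr)
    assume inf: "infinite (UNIV :: 'x set)"
    define N where "N = nat \<lceil>1 / \<nu> 1\<rceil> + 1"
    obtain F :: "'x set" where F: "finite F" "card F = N" using infinite_arbitrarily_large[OF inf] by blast
    have hs: "((\<lambda>x. K 1 x v0 v0) has_sum 1) UNIV" using K_prob[OF one_in v0 v0] .
    have "(\<Sum>x\<in>F. K 1 x v0 v0) \<le> 1"
      using finite_sum_le_has_sum[OF hs F(1)] Kb[OF one_in v0 v0] by auto
    moreover have "real N * \<nu> 1 \<le> (\<Sum>x\<in>F. K 1 x v0 v0)"
    proof -
      have "(\<Sum>x\<in>F. \<nu> 1) \<le> (\<Sum>x\<in>F. K 1 x v0 v0)" using H2[OF one_in v0 v0] by (intro sum_mono) auto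
      then show ?thesis using F by simp
    qed
    moreover have "1 < real N * \<nu> 1"
    proof -
      have np: "0 < \<nu> 1" using H2_pos[OF one_in] .
      have "1 / \<nu> 1 \<le> real (nat \<lceil>1 / \<nu> 1\<rceil>)" by linarith
      then have "1 / \<nu> 1 + 1 \<le> real N" unfolding N_def by simp
      then have "(1 / \<nu> 1 + 1) * \<nu> 1 \<le> real N * \<nu> 1" using np by (intro mult_right_mono) auto
      moreover have "(1 / \<nu> 1 + 1) * \<nu> 1 = 1 + \<nu> 1" using np by (simp add: field_simps)
      ultimately show ?thesis using np by linarith
    qed
    ultimately show False by linarith
  qed
  have Ksum: "\<And>i v w. i \<in> {1..n} \<Longrightarrow> v \<in> space M \<Longrightarrow> w \<in> space M \<Longrightarrow> (\<Sum>x\<in>UNIV. K i x v w) = 1"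
  proof -
    fix i v w assume a: "i \<in> {1..n}" "v \<in> space M" "w \<in> space M"
    have "((\<lambda>x. K i x v w) has_sum (\<Sum>x\<in>UNIV. K i x v w)) UNIV" by (rule has_sum_finite[OF fin])
    from has_sum_unique[OF this K_prob[OF a]] show "(\<Sum>x\<in>UNIV. K i x v w) = 1" .
  qed
  define ys where "ys = xs(q' := x')"
  define I where "I f j lo hi \<longleftrightarrow> (\<forall>y\<in>space M. lo * rchain M f (q+1) j y \<le> rchain M f q (Suc j) y \<and> rchain M f q (Suc j) y \<le> hi * rchain M f (q+1) j y)"
    for f :: "nat \<Rightarrow> 'v \<Rightarrow> 'v \<Rightarrow> real" and j lo hi
  have ZM: "(\<lambda>p. K k (Z k) (fst p) (snd p)) \<in> borel_measurable (M \<Otimes>\<^sub>M M)"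
    if "k \<in> {1..n}" for Z :: "nat \<Rightarrow> 'x" and k
    by (rule K_meas[OF that])
  have ZB: "\<nu> k \<le> K k (Z k) x y \<and> K k (Z k) x y \<le> 1"
    if "k \<in> {1..n}" "x \<in> space M" "y \<in> space M" for Z :: "nat \<Rightarrow> 'x" and k x y
    by (rule H2[OF that])
  have ZB0: "0 \<le> K k (Z k) x y \<and> K k (Z k) x y \<le> 1"
    if "k \<in> {1..n}" "x \<in> space M" "y \<in> space M" for Z :: "nat \<Rightarrow> 'x" and k x y
    by (rule Kb[OF that])
  have weak: "I (\<lambda>k. K k (Z k)) j lo hi"
    if "I (\<lambda>k. K k (Z k)) j lo1 hi1" "lo \<le> lo1" "hi1 \<le> hi" "q + 1 + j \<le> n + 1" for Z j lo hi lo1 hi1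
  proof -
    have w: "rchain M (\<lambda>k. K k (Z k)) (q+1) j \<in> borel_measurable M \<and> (\<forall>y\<in>space M. 0 \<le> rchain M (\<lambda>k. K k (Z k)) (q+1) j y \<and> rchain M (\<lambda>k. K k (Z k)) (q+1) j y \<le> 1)"
      using ZM ZB0 that(4) q1 by (intro rchain_01[OF P]) auto
    show ?thesis using that(1) unfolding I_def
    proof (intro ballI conjI)
      fix y assume y: "y \<in> space M" and I1: "\<forall>y\<in>space M. lo1 * rchain M (\<lambda>k. K k (Z k)) (q+1) j y \<le> rchain M (\<lambda>k. K k (Z k)) q (Suc j) y \<and> rchain M (\<lambda>k. K k (Z k)) q (Suc j) y \<le> hi1 * rchain M (\<lambda>k. K k (Z k)) (q+1) j y"
      have "lo * rchain M (\<lambda>k. K k (Z k)) (q+1) j y \<le> lo1 * rchain M (\<lambda>k. K k (Z k)) (q+1) j y"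
        using w y that(2) by (intro mult_right_mono) auto
      then show "lo * rchain M (\<lambda>k. K k (Z k)) (q+1) j y \<le> rchain M (\<lambda>k. K k (Z k)) q (Suc j) y" using I1 y by auto
      have "hi1 * rchain M (\<lambda>k. K k (Z k)) (q+1) j y \<le> hi * rchain M (\<lambda>k. K k (Z k)) (q+1) j y"
        using w y that(3) by (intro mult_right_mono) auto
      then show "rchain M (\<lambda>k. K k (Z k)) q (Suc j) y \<le> hi * rchain M (\<lambda>k. K k (Z k)) (q+1) j y" using I1 y by auto
    qed
  qed
  have base: "I (\<lambda>k. K k (Z k)) 0 (\<nu> q) 1" for Z :: "nat \<Rightarrow> 'x"
  proof -
    have "rchain M (\<lambda>k. K k (Z k)) q 1 \<in> borel_measurable M \<and>
      (\<forall>y\<in>space M. (\<Prod>k\<in>{q..<q+1}. \<nu> k) \<le> rchain M (\<lambda>k. K k (Z k)) q 1 y \<and> rchain M (\<lambda>k. K k (Z k)) q 1 y \<le> 1)"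
      using ZM ZB q1 qq qn H2_pos by (intro rchain_props[OF P]) (auto intro: less_imp_le)
    then show ?thesis unfolding I_def by simp
  qed
  have main: "\<exists>lo hi. \<nu> q \<le> lo \<and> lo \<le> hi \<and> hi \<le> 1 \<and> hi - lo \<le> (\<Prod>k\<in>{q+1..<min (q+1+j) q'}. 1 - \<nu> k)
      \<and> I (\<lambda>k. K k (xs k)) j lo hi \<and> I (\<lambda>k. K k (ys k)) j lo hi"
    if "j \<le> n - q" for j
    using that
  proof (induction j)
    case 0
    have "min (q+1) q' \<le> q + 1" by simp
    then have "{q+1..<min (q+1+0) q'} = {}" by auto
    then show ?case using base nu1[of q] q1 qq qn H2_pos[of q]
      by (intro exI[of _ "\<nu> q"] exI[of _ 1]) auto
  next
    case (Suc j)
    then obtain lo hi where IH: "\<nu> q \<le> lo" "lo \<le> hi" "hi \<le> 1"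
      "hi - lo \<le> (\<Prod>k\<in>{q+1..<min (q+1+j) q'}. 1 - \<nu> k)"
      "I (\<lambda>k. K k (xs k)) j lo hi" "I (\<lambda>k. K k (ys k)) j lo hi" by auto
    define k where "k = q + 1 + j"
    have kn: "k \<in> {1..n}" using Suc.prems q1 unfolding k_def by auto
    have rng: "\<And>i. i \<in> {q..q+1+j} \<Longrightarrow> i \<in> {1..n}" using Suc.prems q1 by auto
    have CS: "\<exists>lo' hi'. lo \<le> lo' \<and> lo' \<le> hi' \<and> hi' \<le> hi \<and> hi' - lo' \<le> (1 - c) * (hi - lo) \<and>
          (\<forall>y\<in>space M. lo' * rchain M (\<lambda>k. K k (Z k)) (q+1) (Suc j) y \<le> rchain M (\<lambda>k. K k (Z k)) q (Suc (Suc j)) y \<and>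
           rchain M (\<lambda>k. K k (Z k)) q (Suc (Suc j)) y \<le> hi' * rchain M (\<lambda>k. K k (Z k)) (q+1) (Suc j) y)"
      if IZ: "I (\<lambda>k. K k (Z k)) j lo hi" and c0: "0 \<le> c" and c1: "c \<le> 1"
        and cb: "\<And>x y. x \<in> space M \<Longrightarrow> y \<in> space M \<Longrightarrow> c \<le> K k (Z k) x y" for Z :: "nat \<Rightarrow> 'x" and c
    proof (rule chain_step[OF P])
      fix i assume i: "i \<in> {q..q+1+j}"
      show "(\<lambda>p. K i (Z i) (fst p) (snd p)) \<in> borel_measurable (M \<Otimes>\<^sub>M M)" by (rule ZM[OF rng[OF i]])
      fix x y assume x: "x \<in> space M" and y: "y \<in> space M"
      show "0 \<le> K i (Z i) x y \<and> K i (Z i) x y \<le> 1" by (rule ZB0[OF rng[OF i] x y])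
    next
      fix x y assume x: "x \<in> space M" and y: "y \<in> space M"
      show "c \<le> K (q + 1 + j) (Z (q + 1 + j)) x y" using cb[OF x y] unfolding k_def .
    next
      show "0 \<le> c" by (rule c0)
      show "c \<le> 1" by (rule c1)
      show "lo \<le> hi" by (rule IH(2))
      show "\<forall>y\<in>space M. lo * rchain M (\<lambda>k. K k (Z k)) (q + 1) j y \<le> rchain M (\<lambda>k. K k (Z k)) q (Suc j) y \<and>
         rchain M (\<lambda>k. K k (Z k)) q (Suc j) y \<le> hi * rchain M (\<lambda>k. K k (Z k)) (q + 1) j y"
        using IZ unfolding I_def .
    qed
    show ?case
    proof (cases "k < q'")
      case True
      have eqf: "\<And>i. i \<in> {q..q+1+j} \<Longrightarrow> (\<lambda>x y. K i (xs i) x y) = (\<lambda>x y. K i (ys i) x y)"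
        using True unfolding ys_def k_def by auto
      have e1: "rchain M (\<lambda>k. K k (xs k)) q (Suc j) = rchain M (\<lambda>k. K k (ys k)) q (Suc j)"
        using eqf by (intro rchain_cong) auto
      have e2: "rchain M (\<lambda>k. K k (xs k)) (q+1) j = rchain M (\<lambda>k. K k (ys k)) (q+1) j"
        using eqf by (intro rchain_cong) auto
      have e3: "rchain M (\<lambda>k. K k (xs k)) q (Suc (Suc j)) = rchain M (\<lambda>k. K k (ys k)) q (Suc (Suc j))"
        using eqf by (intro rchain_cong) auto
      have e4: "rchain M (\<lambda>k. K k (xs k)) (q+1) (Suc j) = rchain M (\<lambda>k. K k (ys k)) (q+1) (Suc j)"
        using eqf by (intro rchain_cong) auto
      obtain lo' hi' where st: "lo \<le> lo'" "lo' \<le> hi'" "hi' \<le> hi" "hi' - lo' \<le> (1 - \<nu> k) * (hi - lo)"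
        "\<forall>y\<in>space M. lo' * rchain M (\<lambda>k. K k (xs k)) (q+1) (Suc j) y \<le> rchain M (\<lambda>k. K k (xs k)) q (Suc (Suc j)) y \<and>
           rchain M (\<lambda>k. K k (xs k)) q (Suc (Suc j)) y \<le> hi' * rchain M (\<lambda>k. K k (xs k)) (q+1) (Suc j) y"
      proof -
        have "\<exists>lo' hi'. lo \<le> lo' \<and> lo' \<le> hi' \<and> hi' \<le> hi \<and> hi' - lo' \<le> (1 - \<nu> k) * (hi - lo) \<and>
          (\<forall>y\<in>space M. lo' * rchain M (\<lambda>k. K k (xs k)) (q+1) (Suc j) y \<le> rchain M (\<lambda>k. K k (xs k)) q (Suc (Suc j)) y \<and>
           rchain M (\<lambda>k. K k (xs k)) q (Suc (Suc j)) y \<le> hi' * rchain M (\<lambda>k. K k (xs k)) (q+1) (Suc j) y)"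
        proof (rule CS[OF IH(5) less_imp_le[OF H2_pos[OF kn]] nu1[OF kn]])
          fix x y assume x: "x \<in> space M" and y: "y \<in> space M"
          from ZB[OF kn x y] show "\<nu> k \<le> K k (xs k) x y" by (rule conjunct1)
        qed
        then show ?thesis using that by blast
      qed
      have pr: "(\<Prod>k\<in>{q+1..<min (q+1+Suc j) q'}. 1 - \<nu> k) = (\<Prod>k\<in>{q+1..<min (q+1+j) q'}. 1 - \<nu> k) * (1 - \<nu> k)"
      proof -
        have m1: "min (q+1+Suc j) q' = Suc k" using True unfolding k_def by simp
        have m2: "min (q+1+j) q' = k" using True unfolding k_def by simp
        show ?thesis unfolding m1 m2 by (simp add: prod.atLeastLessThan_Suc k_def)
      qed
      have nk: "0 \<le> 1 - \<nu> k" using nu1[OF kn] by simp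
      have "hi' - lo' \<le> (1 - \<nu> k) * (\<Prod>k\<in>{q+1..<min (q+1+j) q'}. 1 - \<nu> k)"
        using st(4) mult_left_mono[OF IH(4) nk] by linarith
      then have w: "hi' - lo' \<le> (\<Prod>k\<in>{q+1..<min (q+1+Suc j) q'}. 1 - \<nu> k)" unfolding pr by (simp add: mult.commute)
      have I1: "I (\<lambda>k. K k (xs k)) (Suc j) lo' hi'" using st(5) unfolding I_def by simp
      have I2: "I (\<lambda>k. K k (ys k)) (Suc j) lo' hi'" using st(5) unfolding I_def e3 e4 by simp
      show ?thesis using IH st w I1 I2 by (intro exI[of _ lo'] exI[of _ hi']) auto
    next
      case False
      have mm: "min (q+1+Suc j) q' = min (q+1+j) q'" using False unfolding k_def by simp
      have stp: "I (\<lambda>k. K k (Z k)) (Suc j) lo hi" if IZ: "I (\<lambda>k. K k (Z k)) j lo hi" for Z :: "nat \<Rightarrow> 'x"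
      proof -
        have "\<exists>lo' hi'. lo \<le> lo' \<and> lo' \<le> hi' \<and> hi' \<le> hi \<and> hi' - lo' \<le> (1 - 0) * (hi - lo) \<and>
          (\<forall>y\<in>space M. lo' * rchain M (\<lambda>k. K k (Z k)) (q+1) (Suc j) y \<le> rchain M (\<lambda>k. K k (Z k)) q (Suc (Suc j)) y \<and>
           rchain M (\<lambda>k. K k (Z k)) q (Suc (Suc j)) y \<le> hi' * rchain M (\<lambda>k. K k (Z k)) (q+1) (Suc j) y)"
        proof (rule chain_step[OF P])
          fix i assume i: "i \<in> {q..q+1+j}"
          show "(\<lambda>p. K i (Z i) (fst p) (snd p)) \<in> borel_measurable (M \<Otimes>\<^sub>M M)" by (rule ZM[OF rng[OF i]])
          fix x y assume x: "x \<in> space M" and y: "y \<in> space M"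
          show "0 \<le> K i (Z i) x y \<and> K i (Z i) x y \<le> 1" by (rule ZB0[OF rng[OF i] x y])
        next
          fix x y assume x: "x \<in> space M" and y: "y \<in> space M"
          have "0 \<le> K k (Z k) x y" using ZB0[OF kn x y] by (rule conjunct1)
          then show "0 \<le> K (q + 1 + j) (Z (q + 1 + j)) x y" unfolding k_def .
        next
          show "(0::real) \<le> 0" by simp
          show "(0::real) \<le> 1" by simp
          show "lo \<le> hi" by (rule IH(2))
          show "\<forall>y\<in>space M. lo * rchain M (\<lambda>k. K k (Z k)) (q + 1) j y \<le> rchain M (\<lambda>k. K k (Z k)) q (Suc j) y \<and>
             rchain M (\<lambda>k. K k (Z k)) q (Suc j) y \<le> hi * rchain M (\<lambda>k. K k (Z k)) (q + 1) j y"
            using IZ unfolding I_def .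
        qed
        then obtain lo' hi' where "lo \<le> lo'" "hi' \<le> hi" "I (\<lambda>k. K k (Z k)) (Suc j) lo' hi'"
          unfolding I_def by auto
        then show ?thesis using Suc.prems by (rule_tac weak) auto
      qed
      show ?thesis using IH stp[OF IH(5)] stp[OF IH(6)] unfolding mm
        by (intro exI[of _ lo] exI[of _ hi]) auto
    qed
  qed
  obtain lo hi where fin_inv: "\<nu> q \<le> lo" "lo \<le> hi" "hi \<le> 1" "hi - lo \<le> (\<Prod>k\<in>{q+1..<min (q+1+(n-q)) q'}. 1 - \<nu> k)"
      "I (\<lambda>k. K k (xs k)) (n-q) lo hi" "I (\<lambda>k. K k (ys k)) (n-q) lo hi"
    using main[of "n-q"] by auto
  have pe: "{q+1..<min (q+1+(n-q)) q'} = {q+1..q'-1}" using qn q1 qq by auto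
  have cp: "cond_prob M K n q Z = (\<integral>y. rchain M (\<lambda>k. K k (Z k)) q (Suc (n-q)) y \<partial>M) / (\<integral>y. rchain M (\<lambda>k. K k (Z k)) (q+1) (n-q) y \<partial>M)"
    for Z :: "nat \<Rightarrow> 'x"
  proof -
    have n1: "measure (hmm_law M K n) {p \<in> space (hmm_law M K n). \<forall>k\<in>{q..n}. snd p k = Z k}
       = (\<integral>y. rchain M (\<lambda>k. K k (Z k)) q (n + 1 - q) y \<partial>M)"
      using q1 qq qn by (intro meas_cyl[OF P fin K_meas Ksum Kb]) auto
    have n2: "measure (hmm_law M K n) {p \<in> space (hmm_law M K n). \<forall>k\<in>{q+1..n}. snd p k = Z k}
       = (\<integral>y. rchain M (\<lambda>k. K k (Z k)) (q+1) (n + 1 - (q+1)) y \<partial>M)"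
      using q1 qq qn by (intro meas_cyl[OF P fin K_meas Ksum Kb]) auto
    have e: "n + 1 - q = Suc (n - q)" "n + 1 - (q+1) = n - q" using qq qn by auto
    show ?thesis unfolding cond_prob_def using n1 n2 unfolding e by simp
  qed
  have rb: "lo \<le> cond_prob M K n q Z \<and> cond_prob M K n q Z \<le> hi" if IZ: "I (\<lambda>k. K k (Z k)) (n-q) lo hi" for Z :: "nat \<Rightarrow> 'x"
  proof -
    have u: "rchain M (\<lambda>k. K k (Z k)) q (Suc (n-q)) \<in> borel_measurable M \<and> (\<forall>y\<in>space M. 0 \<le> rchain M (\<lambda>k. K k (Z k)) q (Suc (n-q)) y \<and> rchain M (\<lambda>k. K k (Z k)) q (Suc (n-q)) y \<le> 1)"
      using ZM ZB0 q1 qq qn by (intro rchain_01[OF P]) auto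
    have w: "rchain M (\<lambda>k. K k (Z k)) (q+1) (n-q) \<in> borel_measurable M \<and>
      (\<forall>y\<in>space M. (\<Prod>k\<in>{q+1..<q+1+(n-q)}. \<nu> k) \<le> rchain M (\<lambda>k. K k (Z k)) (q+1) (n-q) y \<and> rchain M (\<lambda>k. K k (Z k)) (q+1) (n-q) y \<le> 1)"
      using ZM ZB q1 qq qn H2_pos by (intro rchain_props[OF P]) (auto intro: less_imp_le)
    have cpos: "0 < (\<Prod>k\<in>{q+1..<q+1+(n-q)}. \<nu> k)" using H2_pos q1 qq qn by (intro prod_pos) auto
    show ?thesis unfolding cp
      by (rule ratio_bound[OF P _ _ _ cpos]) (use u w IZ in \<open>auto simp: I_def\<close>)
  qed
  have qin: "q \<in> {1..n}" using q1 qq qn by simp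
  have "\<bar>ln (cond_prob M K n q xs) - ln (cond_prob M K n q ys)\<bar> \<le> (1 / \<nu> q) * (\<Prod>k\<in>{q+1..q'-1}. 1 - \<nu> k)"
    using rb[OF fin_inv(5)] rb[OF fin_inv(6)]
    by (intro log_bound[OF H2_pos[OF qin] fin_inv(1) _ _ _ _ fin_inv(4)[unfolded pe]]) auto
  then show ?thesis unfolding ys_def .
qed

end
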